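(* Let $0<\beta<\delta$, $N_0$ a non-negative integer, and set $\hat s=s/(\delta-\beta)$. Let $g(z,t)=\left[\frac{\delta-\beta z-(1-z)\delta e^{(\beta-\delta)t}}{\delta-\beta z-(1-z)\beta e^{(\beta-\delta)t}}\right]^{N_0}$. Then for $0\le z<1$ and $\operatorname{Re}s>0$, $$\int_0^\infty g(z,t)e^{-st}\,dt=\left(\frac{\delta-\beta z}{1-z}\right)^{\hat s}\int_z^1 (1-u)^{\hat s-1}(\delta-\beta u)^{-\hat s-1}u^{N_0}\,du,$$ and this function $G(z,s)$ satisfies the ODE $(1-z)(\delta-\beta z)\,\partial_z G(z,s)=sG(z,s)-z^{N_0}$.
   Context: Powers of positive real numbers are taken with the principal branch. *)

theory Defs
  imports "HOL-Analysis.Analysis"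
begin

definition gfun :: "real \<Rightarrow> real \<Rightarrow> nat \<Rightarrow> real \<Rightarrow> real \<Rightarrow> real" where
  "gfun \<beta> \<delta> N0 z t =
     ((\<delta> - \<beta> * z - (1 - z) * \<delta> * exp ((\<beta> - \<delta>) * t)) /
      (\<delta> - \<beta> * z - (1 - z) * \<beta> * exp ((\<beta> - \<delta>) * t))) ^ N0"

definition Gfun :: "real \<Rightarrow> real \<Rightarrow> nat \<Rightarrow> real \<Rightarrow> complex \<Rightarrow> complex" where
  "Gfun \<beta> \<delta> N0 z s =
     integral {0..} (\<lambda>t. complex_of_real (gfun \<beta> \<delta> N0 z t) * exp (- s * complex_of_real t))"

end

theory Submission
  imports Defs
begin


definition uu :: "real \<Rightarrow> real \<Rightarrow> real \<Rightarrow> real \<Rightarrow> real" where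
  "uu \<beta> \<delta> z t = (\<delta> - \<beta> * z - (1 - z) * \<delta> * exp ((\<beta> - \<delta>) * t)) /
      (\<delta> - \<beta> * z - (1 - z) * \<beta> * exp ((\<beta> - \<delta>) * t))"

lemma den_ge:
  fixes \<beta> \<delta> z t :: real
  assumes "0 < \<beta>" "\<beta> < \<delta>" "0 \<le> z" "z < 1" "0 \<le> t"
  shows "\<delta> - \<beta> \<le> \<delta> - \<beta> * z - (1 - z) * \<beta> * exp ((\<beta> - \<delta>) * t)"
proof -
  have "(\<beta> - \<delta>) * t \<le> 0" using mult_right_mono[of \<beta> \<delta> t] assms by (simp add: left_diff_distrib)
  hence "exp ((\<beta> - \<delta>) * t) \<le> 1" by simp
  hence "(1 - z) * \<beta> * exp ((\<beta> - \<delta>) * t) \<le> (1 - z) * \<beta>"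
    using assms by (simp add: mult_left_le)
  thus ?thesis by (simp add: algebra_simps)
qed

lemma uu_facts:
  fixes \<beta> \<delta> z t :: real
  assumes "0 < \<beta>" "\<beta> < \<delta>" "0 \<le> z" "z < 1" "0 \<le> t"
  defines "a \<equiv> exp ((\<beta> - \<delta>) * t)"
  defines "den \<equiv> \<delta> - \<beta> * z - (1 - z) * \<beta> * a"
  shows "1 - uu \<beta> \<delta> z t = (1 - z) * (\<delta> - \<beta>) * a / den"
    and "\<delta> - \<beta> * uu \<beta> \<delta> z t = (\<delta> - \<beta>) * (\<delta> - \<beta> * z) / den"
    and "uu \<beta> \<delta> z t - z = (1 - z) * (\<delta> - \<beta> * z) * (1 - a) / den"
    and "den > 0"
proof -
  have d: "den \<ge> \<delta> - \<beta>" unfolding den_def a_def by (rule den_ge[OF assms(1-5)])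
  hence dp: "den > 0" using assms by linarith
  show "den > 0" by fact
  have u: "uu \<beta> \<delta> z t = (\<delta> - \<beta> * z - (1 - z) * \<delta> * a) / den"
    unfolding uu_def a_def den_def by simp
  show "1 - uu \<beta> \<delta> z t = (1 - z) * (\<delta> - \<beta>) * a / den"
    unfolding u using dp by (simp add: field_simps den_def)
  show "\<delta> - \<beta> * uu \<beta> \<delta> z t = (\<delta> - \<beta>) * (\<delta> - \<beta> * z) / den"
    unfolding u using dp by (simp add: field_simps den_def)
  show "uu \<beta> \<delta> z t - z = (1 - z) * (\<delta> - \<beta> * z) * (1 - a) / den"
    unfolding u using dp by (simp add: field_simps den_def)
qed

lemma uu_range:
  fixes \<beta> \<delta> z t :: real
  assumes "0 < \<beta>" "\<beta> < \<delta>" "0 \<le> z" "z < 1" "0 \<le> t"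
  shows "z \<le> uu \<beta> \<delta> z t" "uu \<beta> \<delta> z t < 1" "0 < \<delta> - \<beta> * uu \<beta> \<delta> z t"
proof -
  note f = uu_facts[OF assms]
  have "(\<beta> - \<delta>) * t \<le> 0" using mult_right_mono[of \<beta> \<delta> t] assms by (simp add: left_diff_distrib)
  hence a1: "exp ((\<beta> - \<delta>) * t) \<le> 1" by simp
  have bz: "\<beta> * z \<le> \<beta>" using assms by (simp add: mult_left_le)
  have "(1 - z) * (\<delta> - \<beta> * z) * (1 - exp ((\<beta> - \<delta>) * t)) \<ge> 0"
    by (intro mult_nonneg_nonneg; use assms a1 bz in linarith)
  hence "uu \<beta> \<delta> z t - z \<ge> 0" using f(3) f(4) by simp
  thus "z \<le> uu \<beta> \<delta> z t" by simp
  have "(1 - z) * (\<delta> - \<beta>) * exp ((\<beta> - \<delta>) * t) > 0" using assms by simp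
  hence "1 - uu \<beta> \<delta> z t > 0" using f(1) f(4) by simp
  thus "uu \<beta> \<delta> z t < 1" by simp
  have "\<beta> * z \<le> \<beta>" using assms by (simp add: mult_left_le)
  hence "(\<delta> - \<beta>) * (\<delta> - \<beta> * z) > 0" using assms
    by (intro mult_pos_pos) linarith+
  thus "0 < \<delta> - \<beta> * uu \<beta> \<delta> z t" using f(2) f(4) by simp
qed

lemma deriv_alg:
  fixes D c r a bb dd :: real
  assumes "D - c * bb * a \<noteq> 0" "r = dd - bb"
  shows "((c * dd * (r * a)) * (D - c * bb * a) - (D - c * dd * a) * (c * bb * (r * a))) /
            ((D - c * bb * a) * (D - c * bb * a))
        = (c * r * a / (D - c * bb * a)) * (r * D / (D - c * bb * a))"
proof -
  have "(c * dd * (r * a)) * (D - c * bb * a) - (D - c * dd * a) * (c * bb * (r * a))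
      = c * r * a * (r * D)" unfolding assms(2) by (simp add: algebra_simps)
  thus ?thesis using assms(1) by (simp add: field_simps)
qed

lemma uu_deriv:
  fixes \<beta> \<delta> z t :: real
  assumes "0 < \<beta>" "\<beta> < \<delta>" "0 \<le> z" "z < 1" "0 \<le> t"
  shows "(uu \<beta> \<delta> z has_real_derivative ((1 - uu \<beta> \<delta> z t) * (\<delta> - \<beta> * uu \<beta> \<delta> z t))) (at t)"
proof -
  note f = uu_facts[OF assms]
  define D where "D = \<delta> - \<beta> * z"
  define c where "c = 1 - z"
  define r where "r = \<delta> - \<beta>"
  define a where "a = exp ((\<beta> - \<delta>) * t)"
  have dp: "D - c * \<beta> * a \<noteq> 0" using f(4) unfolding D_def c_def a_def by simp
  have e: "uu \<beta> \<delta> z = (\<lambda>t. (D - c * \<delta> * exp ((\<beta> - \<delta>) * t)) / (D - c * \<beta> * exp ((\<beta> - \<delta>) * t)))"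
    by (simp add: uu_def fun_eq_iff D_def c_def)
  have de: "((\<lambda>t. exp ((\<beta> - \<delta>) * t)) has_real_derivative (- r * a)) (at t)"
    unfolding a_def r_def by (auto intro!: derivative_eq_intros simp: algebra_simps)
  have dn: "((\<lambda>t. D - c * \<delta> * exp ((\<beta> - \<delta>) * t)) has_real_derivative (c * \<delta> * (r * a))) (at t)"
    by (rule DERIV_cong[OF DERIV_diff[OF DERIV_const DERIV_cmult[OF de]]]) simp
  have dd: "((\<lambda>t. D - c * \<beta> * exp ((\<beta> - \<delta>) * t)) has_real_derivative (c * \<beta> * (r * a))) (at t)"
    by (rule DERIV_cong[OF DERIV_diff[OF DERIV_const DERIV_cmult[OF de]]]) simp
  have "(uu \<beta> \<delta> z has_real_derivative
     ((c * \<delta> * (r * a)) * (D - c * \<beta> * a) - (D - c * \<delta> * a) * (c * \<beta> * (r * a))) /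
            ((D - c * \<beta> * a) * (D - c * \<beta> * a))) (at t)"
    unfolding e using DERIV_divide[OF dn dd] dp unfolding a_def by simp
  also have "((c * \<delta> * (r * a)) * (D - c * \<beta> * a) - (D - c * \<delta> * a) * (c * \<beta> * (r * a))) /
            ((D - c * \<beta> * a) * (D - c * \<beta> * a)) = (c * r * a / (D - c * \<beta> * a)) * (r * D / (D - c * \<beta> * a))"
    by (rule deriv_alg[OF dp r_def])
  also have "\<dots> = (1 - uu \<beta> \<delta> z t) * (\<delta> - \<beta> * uu \<beta> \<delta> z t)"
    unfolding f(1) f(2) D_def c_def r_def a_def by (simp add: mult.assoc)
  finally show ?thesis .
qed

definition FF :: "real \<Rightarrow> real \<Rightarrow> nat \<Rightarrow> complex \<Rightarrow> real \<Rightarrow> complex" where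
  "FF \<beta> \<delta> N0 sh u = complex_of_real (1 - u) powr (sh - 1) * complex_of_real (\<delta> - \<beta> * u) powr (- sh - 1)
                 * complex_of_real (u ^ N0)"

lemma cpowr_pos: "0 < x \<Longrightarrow> complex_of_real x powr c = exp (c * of_real (ln x))"
  by (simp add: powr_def Ln_of_real)

lemma cof_pos: "0 < x \<Longrightarrow> complex_of_real x = exp (of_real (ln x))"
  by (subst exp_of_real) simp

lemma FF_exp: "u < 1 \<Longrightarrow> 0 < \<delta> - \<beta> * u \<Longrightarrow> FF \<beta> \<delta> N0 sh u =
   exp ((sh - 1) * of_real (ln (1 - u)) + (- sh - 1) * of_real (ln (\<delta> - \<beta> * u))) * of_real (u ^ N0)"
proof -
  assume a: "u < 1" "0 < \<delta> - \<beta> * u"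
  have h1: "complex_of_real (1 - u) powr (sh - 1) = exp ((sh - 1) * of_real (ln (1 - u)))"
    by (rule cpowr_pos) (use a in simp)
  have h2: "complex_of_real (\<delta> - \<beta> * u) powr (- sh - 1) = exp ((- sh - 1) * of_real (ln (\<delta> - \<beta> * u)))"
    by (rule cpowr_pos) (use a in simp)
  show ?thesis unfolding FF_def h1 h2 exp_add by simp
qed

lemma cancel_lem: "(D::real) > 0 \<Longrightarrow> c > 0 \<Longrightarrow> r > 0 \<Longrightarrow> den > 0 \<Longrightarrow>
   (D / c) * (c * r * a / den) / (r * D / den) = a"
  by (simp add: field_simps)

lemma key:
  assumes "0 < \<beta>" "\<beta> < \<delta>" "0 \<le> z" "z < 1" "0 \<le> t"
  and sh: "sh = s / complex_of_real (\<delta> - \<beta>)"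
  shows "complex_of_real (gfun \<beta> \<delta> N0 z t) * exp (- s * complex_of_real t) =
     complex_of_real ((\<delta> - \<beta> * z) / (1 - z)) powr sh *
       (((1 - uu \<beta> \<delta> z t) * (\<delta> - \<beta> * uu \<beta> \<delta> z t)) *\<^sub>R FF \<beta> \<delta> N0 sh (uu \<beta> \<delta> z t))"
proof -
  define U where "U = uu \<beta> \<delta> z t"
  define A where "A = 1 - U"
  define B where "B = \<delta> - \<beta> * U"
  define K0 where "K0 = (\<delta> - \<beta> * z) / (1 - z)"
  note f = uu_facts[OF assms(1-5)]
  note r = uu_range[OF assms(1-5)]
  have Ap: "A > 0" using r unfolding A_def U_def by simp
  have Bp: "B > 0" using r unfolding B_def U_def by simp
  have "\<beta> * z \<le> \<beta>" using assms by (simp add: mult_left_le)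
  hence Dp: "\<delta> - \<beta> * z > 0" using assms by linarith
  have K0p: "K0 > 0" using Dp assms unfolding K0_def by simp
  have "K0 * A / B = exp ((\<beta> - \<delta>) * t)"
  proof -
    have "A = (1 - z) * (\<delta> - \<beta>) * exp ((\<beta> - \<delta>) * t) / (\<delta> - \<beta> * z - (1 - z) * \<beta> * exp ((\<beta> - \<delta>) * t))"
      unfolding A_def U_def by (rule f(1))
    moreover have "B = (\<delta> - \<beta>) * (\<delta> - \<beta> * z) / (\<delta> - \<beta> * z - (1 - z) * \<beta> * exp ((\<beta> - \<delta>) * t))"
      unfolding B_def U_def by (rule f(2))
    ultimately show ?thesis unfolding K0_def
      by (simp only:) (rule cancel_lem, use f(4) assms Dp in auto)
  qed
  hence "ln (K0 * A / B) = (\<beta> - \<delta>) * t" by simp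
  hence lnK: "ln K0 = (\<beta> - \<delta>) * t - ln A + ln B"
    using K0p Ap Bp by (simp add: ln_div ln_mult)
  have g: "gfun \<beta> \<delta> N0 z t = U ^ N0" unfolding gfun_def U_def uu_def by simp
  have "complex_of_real K0 powr sh * ((A * B) *\<^sub>R FF \<beta> \<delta> N0 sh U)
     = exp (sh * of_real (ln K0)) * (exp (of_real (ln A)) * exp (of_real (ln B))) *
        exp ((sh - 1) * of_real (ln A) + (- sh - 1) * of_real (ln B)) * of_real (U ^ N0)"
  proof -
    have h1: "complex_of_real K0 powr sh = exp (sh * of_real (ln K0))" using K0p by (rule cpowr_pos)
    have h2: "complex_of_real A = exp (of_real (ln A))" using Ap by (rule cof_pos)
    have h3: "complex_of_real B = exp (of_real (ln B))" using Bp by (rule cof_pos)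
    have h4: "FF \<beta> \<delta> N0 sh U = exp ((sh - 1) * of_real (ln A) + (- sh - 1) * of_real (ln B)) * of_real (U ^ N0)"
      unfolding A_def B_def by (rule FF_exp) (use r in \<open>auto simp: U_def\<close>)
    show ?thesis unfolding scaleR_conv_of_real of_real_mult h1 h2 h3 h4 by (simp only: ac_simps)
  qed
  also have "\<dots> = exp (sh * of_real (ln K0) + of_real (ln A) + of_real (ln B) +
        ((sh - 1) * of_real (ln A) + (- sh - 1) * of_real (ln B))) * of_real (U ^ N0)"
    by (simp only: exp_add mult.assoc)
  also have "sh * of_real (ln K0) + of_real (ln A) + of_real (ln B) +
        ((sh - 1) * of_real (ln A) + (- sh - 1) * of_real (ln B)) = sh * of_real ((\<beta> - \<delta>) * t)"
    unfolding lnK of_real_add of_real_diff by (simp add: algebra_simps)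
  also have "sh * of_real ((\<beta> - \<delta>) * t) = - s * of_real t"
  proof -
    have nz: "complex_of_real (\<delta> - \<beta>) \<noteq> 0" using assms by simp
    have "sh * complex_of_real (\<delta> - \<beta>) = s" unfolding sh using nz by simp
    moreover have "sh * of_real ((\<beta> - \<delta>) * t) = - (sh * complex_of_real (\<delta> - \<beta>)) * of_real t"
      by (simp add: algebra_simps)
    ultimately show ?thesis by simp
  qed
  finally show ?thesis unfolding g K0_def[symmetric] U_def[symmetric] A_def[symmetric] B_def[symmetric]
    by (simp add: mult.commute)
qed

lemma FF_cont:
  assumes "0 < \<beta>" "\<beta> < \<delta>"
  shows "continuous_on {-1<..<1} (FF \<beta> \<delta> N0 sh)"
proof -
  have pos: "0 < \<delta> - \<beta> * v" if "v \<in> {-1<..<1}" for v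
  proof -
    have "\<beta> * v \<le> \<beta> * 1" using that assms by (intro mult_left_mono) auto
    thus ?thesis using assms by linarith
  qed
  have "continuous_on {-1<..<1} (\<lambda>u. exp ((sh - 1) * of_real (ln (1 - u)) + (- sh - 1) * of_real (ln (\<delta> - \<beta> * u))) * of_real (u ^ N0))"
    apply (intro continuous_intros)
    using pos apply fastforce
    using pos apply fastforce
    done
  thus ?thesis
    by (rule continuous_on_cong[THEN iffD1, rotated 2]) (use pos in \<open>auto simp: FF_exp\<close>)
qed

lemma sub_T:
  fixes \<beta> \<delta> z T :: real
  assumes "0 < \<beta>" "\<beta> < \<delta>" "0 \<le> z" "z < 1" "0 \<le> T"
  and sh: "sh = s / complex_of_real (\<delta> - \<beta>)"
  shows "((\<lambda>t. complex_of_real (gfun \<beta> \<delta> N0 z t) * exp (- s * complex_of_real t)) has_integral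
     (complex_of_real ((\<delta> - \<beta> * z) / (1 - z)) powr sh * integral {z..uu \<beta> \<delta> z T} (FF \<beta> \<delta> N0 sh))) {0..T}"
proof -
  define u where "u = uu \<beta> \<delta> z"
  define K where "K = complex_of_real ((\<delta> - \<beta> * z) / (1 - z)) powr sh"
  have der: "(u has_real_derivative ((1 - u t) * (\<delta> - \<beta> * u t))) (at t)" if "0 \<le> t" for t
    unfolding u_def by (rule uu_deriv) (use assms that in auto)
  have mono: "u t \<le> u T" if "0 \<le> t" "t \<le> T" for t
  proof (rule DERIV_nonneg_imp_nondecreasing[OF that(2)])
    fix x assume x: "t \<le> x" "x \<le> T"
    have "0 \<le> (1 - u x) * (\<delta> - \<beta> * u x)"
      using uu_range[of \<beta> \<delta> z x] assms that x unfolding u_def by (intro mult_nonneg_nonneg) auto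
    thus "\<exists>y. DERIV u x :> y \<and> 0 \<le> y" using der[of x] x that by auto
  qed
  have u0: "u 0 = z" using uu_facts(3)[of \<beta> \<delta> z 0] assms unfolding u_def by simp
  have uT: "u T < 1" using uu_range[of \<beta> \<delta> z T] assms unfolding u_def by auto
  have zuT: "z \<le> u T" using uu_range[of \<beta> \<delta> z T] assms unfolding u_def by auto
  have contF: "continuous_on {z..u T} (FF \<beta> \<delta> N0 sh)"
    by (rule continuous_on_subset[OF FF_cont[OF assms(1,2)]]) (use assms uT in auto)
  have contu: "continuous_on {0..T} u"
    by (intro continuous_at_imp_continuous_on ballI DERIV_isCont[OF der]) auto
  have sub: "((\<lambda>t. ((1 - u t) * (\<delta> - \<beta> * u t)) *\<^sub>R FF \<beta> \<delta> N0 sh (u t)) has_integral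
     (integral {u 0..u T} (FF \<beta> \<delta> N0 sh) - integral {u T..u 0} (FF \<beta> \<delta> N0 sh))) {0..T}"
  proof (rule has_integral_substitution_general[of "{}" 0 T u z "u T" "FF \<beta> \<delta> N0 sh" "\<lambda>t. (1 - u t) * (\<delta> - \<beta> * u t)"])
    show "u ` {0..T} \<subseteq> {z..u T}"
    proof
      fix y assume "y \<in> u ` {0..T}"
      then obtain t where t: "0 \<le> t" "t \<le> T" "y = u t" by auto
      have "z \<le> u t" unfolding u_def by (rule uu_range(1)) (use assms t in auto)
      thus "y \<in> {z..u T}" using mono[OF t(1,2)] t(3) by auto
    qed
    show "\<And>x. x \<in> {0..T} - {} \<Longrightarrow> (u has_real_derivative (1 - u x) * (\<delta> - \<beta> * u x)) (at x within {0..T})"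
      by (rule has_field_derivative_at_within[OF der]) auto
  qed (use assms contF contu in auto)
  have I0: "integral {u T..z} (FF \<beta> \<delta> N0 sh) = 0"
  proof (cases "u T = z")
    case True then show ?thesis by simp
  next
    case False
    hence "{u T..z} = {}" using zuT by auto
    then show ?thesis by simp
  qed
  have "((\<lambda>t. ((1 - u t) * (\<delta> - \<beta> * u t)) *\<^sub>R FF \<beta> \<delta> N0 sh (u t)) has_integral
     (integral {z..u T} (FF \<beta> \<delta> N0 sh))) {0..T}" using sub unfolding u0 I0 diff_zero .
  hence "((\<lambda>t. K * (((1 - u t) * (\<delta> - \<beta> * u t)) *\<^sub>R FF \<beta> \<delta> N0 sh (u t))) has_integral
     (K * integral {z..u T} (FF \<beta> \<delta> N0 sh))) {0..T}" by (rule has_integral_mult_right)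
  thus ?thesis unfolding K_def u_def
    by (rule has_integral_eq[rotated]) (rule key[symmetric], use assms sh in auto)
qed


lemma Bint:
  fixes C a z :: real
  assumes "0 < a" "z \<le> 1"
  shows "(\<lambda>v. C * (1 - v) powr (a - 1)) integrable_on {z..1}"
proof -
  define \<Phi> where "\<Phi> = (\<lambda>v::real. - C / a * (1 - v) powr a)"
  have "((\<lambda>v. C * (1 - v) powr (a - 1)) has_integral (\<Phi> 1 - \<Phi> z)) {z..1}"
  proof (rule fundamental_theorem_of_calculus_interior[OF assms(2)])
    have "continuous_on {z..1} (\<lambda>v::real. (1 - v) powr a)"
      by (rule continuous_on_powr') (use assms in \<open>auto intro!: continuous_intros\<close>)
    thus "continuous_on {z..1} \<Phi>" unfolding \<Phi>_def by (rule continuous_on_mult_left)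
  next
    fix x assume x: "x \<in> {z<..<1}"
    have "DERIV (\<lambda>v. (1 - v) powr a) x :> a * (1 - x) powr (a - of_nat 1) * (- 1)"
      by (rule DERIV_fun_powr) (use x in \<open>auto intro!: derivative_eq_intros\<close>)
    hence "DERIV \<Phi> x :> - C / a * (a * (1 - x) powr (a - of_nat 1) * (- 1))"
      unfolding \<Phi>_def by (rule DERIV_cmult)
    hence "DERIV \<Phi> x :> C * (1 - x) powr (a - 1)"
      by (rule DERIV_cong) (use assms in simp)
    thus "(\<Phi> has_vector_derivative C * (1 - x) powr (a - 1)) (at x)"
      by (simp add: has_real_derivative_iff_has_vector_derivative)
  qed
  thus ?thesis by blast
qed

lemma FF_bound:
  fixes \<beta> \<delta> v :: real
  assumes "0 < \<beta>" "\<beta> < \<delta>" "0 \<le> v" "v \<le> 1" "0 < Re sh"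
  shows "norm (FF \<beta> \<delta> N0 sh v) \<le> (\<delta> - \<beta>) powr (- Re sh - 1) * (1 - v) powr (Re sh - 1)"
proof (cases "v = 1")
  case True thus ?thesis by (simp add: FF_def)
next
  case False
  hence v1: "v < 1" using assms by simp
  have bv: "\<beta> * v \<le> \<beta> * 1" using assms by (intro mult_left_mono) auto
  have pos: "\<delta> - \<beta> \<le> \<delta> - \<beta> * v" using bv by simp
  define P where "P = (1 - v) powr (Re sh - 1)"
  define Q where "Q = (\<delta> - \<beta> * v) powr (- Re sh - 1)"
  define C where "C = (\<delta> - \<beta>) powr (- Re sh - 1)"
  have n: "norm (FF \<beta> \<delta> N0 sh v) = P * Q * v ^ N0"
  proof -
    have n1: "norm (complex_of_real (1 - v) powr (sh - 1)) = P"
      unfolding P_def by (subst norm_powr_real_powr) (use v1 in auto)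
    have n2: "norm (complex_of_real (\<delta> - \<beta> * v) powr (- sh - 1)) = Q"
      unfolding Q_def proof (subst norm_powr_real_powr)
      have "\<beta> * v \<le> \<delta>" using pos assms by linarith
      thus "complex_of_real (\<delta> - \<beta> * v) \<in> \<real>" "0 \<le> Re (complex_of_real (\<delta> - \<beta> * v))"
        "Re (complex_of_real (\<delta> - \<beta> * v)) powr Re (- sh - 1) = (\<delta> - \<beta> * v) powr (- Re sh - 1)"
        by auto
    qed
    have n3: "norm (complex_of_real (v ^ N0)) = v ^ N0" using assms by (simp only: norm_of_real) simp
    show ?thesis unfolding FF_def norm_mult n1 n2 n3 ..
  qed
  have QC: "Q \<le> C" unfolding Q_def C_def
    by (rule powr_mono2') (use assms pos in auto)
  have P0: "P \<ge> 0" "Q \<ge> 0" unfolding P_def Q_def by auto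
  have "v ^ N0 \<le> 1" using assms by (simp add: power_le_one)
  hence "P * Q * v ^ N0 \<le> P * Q" using P0 assms by (simp add: mult_left_le)
  also have "\<dots> \<le> P * C" using QC P0 by (simp add: mult_left_mono)
  finally show ?thesis unfolding n C_def P_def by (simp add: mult.commute)
qed

lemma main_z:
  fixes \<beta> \<delta> z :: real and s sh :: complex
  assumes "0 < \<beta>" "\<beta> < \<delta>" "0 \<le> z" "z < 1" "Re s > 0"
  and sh: "sh = s / complex_of_real (\<delta> - \<beta>)"
  shows "FF \<beta> \<delta> N0 sh integrable_on {z..1}"
    and "((\<lambda>t. complex_of_real (gfun \<beta> \<delta> N0 z t) * exp (- s * complex_of_real t)) has_integral
         (complex_of_real ((\<delta> - \<beta> * z) / (1 - z)) powr sh * integral {z..1} (FF \<beta> \<delta> N0 sh))) {0..}"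
proof -
  define h where "h = (\<lambda>t. complex_of_real (gfun \<beta> \<delta> N0 z t) * exp (- s * complex_of_real t))"
  define K where "K = complex_of_real ((\<delta> - \<beta> * z) / (1 - z)) powr sh"
  define u where "u = uu \<beta> \<delta> z"
  define F where "F = FF \<beta> \<delta> N0 sh"
  define fn where "fn = (\<lambda>(n::nat) t. if t \<in> {0..real n} then h t else 0)"
  define Fn where "Fn = (\<lambda>(n::nat) v. if v \<in> {z..u (real n)} then F v else 0)"
  have Resh: "Re sh > 0" unfolding sh using assms by simp
  have ur: "z \<le> u x" "u x < 1" if "0 \<le> x" for x
    unfolding u_def using uu_range[of \<beta> \<delta> z x] assms that by auto
  have fnI: "(fn n has_integral K * integral {z..u (real n)} F) {0..}" for n
  proof -
    have "(h has_integral K * integral {z..u (real n)} F) {0..real n}"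
      unfolding h_def K_def u_def F_def by (rule sub_T) (use assms sh in auto)
    thus ?thesis unfolding fn_def by (subst has_integral_restrict) auto
  qed
  have hbound: "norm (h t) \<le> exp (- Re s * t)" if "0 \<le> t" for t
  proof -
    have g: "gfun \<beta> \<delta> N0 z t = u t ^ N0" unfolding gfun_def u_def uu_def by simp
    have "\<bar>u t\<bar> ^ N0 \<le> 1" using ur[OF that] assms by (intro power_le_one) auto
    hence "norm (h t) \<le> 1 * exp (- Re s * t)"
      unfolding h_def g by (simp add: norm_mult norm_power)
    thus ?thesis by simp
  qed
  have fnbound: "norm (fn n t) \<le> exp (- Re s * t)" if "t \<in> {0..}" for n t
    using hbound[of t] that unfolding fn_def by auto
  have expint: "(\<lambda>t. exp (- Re s * t)) integrable_on {0..}"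
    using has_integral_exp_minus_to_infinity[of "Re s" 0] assms by blast
  have fnconv: "(\<lambda>n. fn n t) \<longlonglongrightarrow> h t" if "t \<in> {0..}" for t
  proof -
    have "eventually (\<lambda>n. real n \<ge> t) sequentially"
      by (meson eventually_sequentiallyI nat_ceiling_le_eq)
    hence "eventually (\<lambda>n. fn n t = h t) sequentially"
      by eventually_elim (use that in \<open>auto simp: fn_def\<close>)
    thus ?thesis by (rule tendsto_eventually)
  qed
  have hint: "h integrable_on {0..}" and lim1: "(\<lambda>n. integral {0..} (fn n)) \<longlonglongrightarrow> integral {0..} h"
    using dominated_convergence[of fn "{0..}" "\<lambda>t. exp (- Re s * t)" h] fnI expint fnbound fnconv
    by blast+
  have FnI: "(Fn n has_integral integral {z..u (real n)} F) {z..1}" for n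
  proof -
    have "continuous_on {z..u (real n)} F"
      unfolding F_def by (rule continuous_on_subset[OF FF_cont[OF assms(1,2)]]) (use assms ur[of "real n"] in auto)
    hence "F integrable_on {z..u (real n)}" by (rule integrable_continuous_interval)
    hence "(F has_integral integral {z..u (real n)} F) {z..u (real n)}" by blast
    thus ?thesis unfolding Fn_def by (subst has_integral_restrict) (use ur[of "real n"] in auto)
  qed
  define B where "B = (\<lambda>v. (\<delta> - \<beta>) powr (- Re sh - 1) * (1 - v) powr (Re sh - 1))"
  have Bint: "B integrable_on {z..1}" unfolding B_def by (rule Bint) (use Resh assms in auto)
  have Fbound: "norm (F v) \<le> B v" if "v \<in> {z..1}" for v
    unfolding F_def B_def by (rule FF_bound) (use assms that Resh in auto)
  have Fnbound: "norm (Fn n v) \<le> B v" if "v \<in> {z..1}" for n v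
  proof -
    have "0 \<le> B v" unfolding B_def by simp
    thus ?thesis using Fbound[OF that] unfolding Fn_def by auto
  qed
  have alim: "(\<lambda>n. exp ((\<beta> - \<delta>) * real n)) \<longlonglongrightarrow> 0"
  proof -
    have "(\<lambda>n. exp (\<beta> - \<delta>) ^ n) \<longlonglongrightarrow> 0"
      by (rule LIMSEQ_power_zero) (use assms in simp)
    moreover have "exp ((\<beta> - \<delta>) * real n) = exp (\<beta> - \<delta>) ^ n" for n
      by (simp add: exp_of_nat_mult[symmetric] mult.commute)
    ultimately show ?thesis by simp
  qed
  have Fnconv: "(\<lambda>n. Fn n v) \<longlonglongrightarrow> F v" if "v \<in> {z..1}" for v
  proof (cases "v = 1")
    case True
    have "Fn n v = 0" for n using ur[of "real n"] True unfolding Fn_def by auto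
    moreover have "F v = 0" using True unfolding F_def FF_def by simp
    ultimately show ?thesis by simp
  next
    case False
    hence v1: "v < 1" using that by simp
    have "(1 - v) / (1 - z) > 0" using v1 assms by simp
    hence "eventually (\<lambda>n. exp ((\<beta> - \<delta>) * real n) < (1 - v) / (1 - z)) sequentially"
      using order_tendstoD(2)[OF alim] by blast
    hence "eventually (\<lambda>n. Fn n v = F v) sequentially"
    proof eventually_elim
      case (elim n)
      define a where "a = exp ((\<beta> - \<delta>) * real n)"
      define den where "den = \<delta> - \<beta> * z - (1 - z) * \<beta> * a"
      have f1: "1 - u (real n) = (1 - z) * (\<delta> - \<beta>) * a / den"
        unfolding u_def a_def den_def by (rule uu_facts(1)) (use assms in auto)
      have dge: "\<delta> - \<beta> \<le> den" unfolding den_def a_def by (rule den_ge) (use assms in auto)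
      have "(\<delta> - \<beta>) / den \<le> 1" using dge assms by simp
      moreover have "(1 - z) * a \<ge> 0" using assms unfolding a_def by simp
      ultimately have "(1 - z) * a * ((\<delta> - \<beta>) / den) \<le> (1 - z) * a"
        by (rule mult_left_le)
      hence "1 - u (real n) \<le> (1 - z) * a" unfolding f1 by (simp add: algebra_simps)
      moreover have "(1 - z) * a < 1 - v" using elim assms unfolding a_def by (simp add: field_simps)
      ultimately have "v \<le> u (real n)" by simp
      thus ?case using that unfolding Fn_def by auto
    qed
    thus ?thesis by (rule tendsto_eventually)
  qed
  have Fint: "F integrable_on {z..1}" and lim2: "(\<lambda>n. integral {z..1} (Fn n)) \<longlonglongrightarrow> integral {z..1} F"
    using dominated_convergence[of Fn "{z..1}" B F] FnI Bint Fnbound Fnconv by blast+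
  have "(\<lambda>n. K * integral {z..1} (Fn n)) \<longlonglongrightarrow> K * integral {z..1} F"
    by (rule tendsto_mult_left[OF lim2])
  moreover have "integral {0..} (fn n) = K * integral {z..1} (Fn n)" for n
    using fnI[of n] FnI[of n] by (simp add: integral_unique)
  ultimately have "(\<lambda>n. integral {0..} (fn n)) \<longlonglongrightarrow> K * integral {z..1} F" by simp
  hence "integral {0..} h = K * integral {z..1} F" using lim1 LIMSEQ_unique by blast
  hence "(h has_integral K * integral {z..1} F) {0..}" using hint by (metis integrable_integral)
  thus "((\<lambda>t. complex_of_real (gfun \<beta> \<delta> N0 z t) * exp (- s * complex_of_real t)) has_integral
         (complex_of_real ((\<delta> - \<beta> * z) / (1 - z)) powr sh * integral {z..1} (FF \<beta> \<delta> N0 sh))) {0..}"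
    unfolding h_def K_def F_def .
  show "FF \<beta> \<delta> N0 sh integrable_on {z..1}" using Fint unfolding F_def .
qed


lemma L_alg:
  fixes D c \<beta> \<delta> z :: real
  assumes "c \<noteq> 0" "D \<noteq> 0" "D = \<delta> - \<beta> * z" "c = 1 - z"
  shows "1 / (D / c) * (((0 - \<beta> * 1) * c - D * (0 - 1)) / (c * c)) = (\<delta> - \<beta>) / (D * c)"
proof -
  have e: "(0 - \<beta> * 1) * c - D * (0 - 1) = \<delta> - \<beta>" unfolding assms(3,4) by (simp add: algebra_simps)
  show ?thesis unfolding e using assms(1,2) by (simp add: field_simps)
qed

lemma ode:
  fixes \<beta> \<delta> z :: real and s sh :: complex
  assumes "0 < \<beta>" "\<beta> < \<delta>" "0 \<le> z" "z < 1" "Re s > 0"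
  and sh: "sh = s / complex_of_real (\<delta> - \<beta>)"
  shows "\<exists>G'. ((\<lambda>w. Gfun \<beta> \<delta> N0 w s) has_vector_derivative G') (at z within {0..<1})
                 \<and> complex_of_real ((1 - z) * (\<delta> - \<beta> * z)) * G'
                     = s * Gfun \<beta> \<delta> N0 z s - complex_of_real (z ^ N0)"
proof -
  define S where "S = {0..<1::real}"
  define F where "F = FF \<beta> \<delta> N0 sh"
  define I0 where "I0 = integral {0..1} F"
  define L where "L = (\<lambda>w::real. ln ((\<delta> - \<beta> * w) / (1 - w)))"
  define E where "E = (\<lambda>w. exp (sh * of_real (L w)))"
  define Q where "Q = (\<lambda>w. I0 - integral {0..w} F)"
  define D where "D = \<delta> - \<beta> * z"
  define L' where "L' = (\<delta> - \<beta>) / (D * (1 - z))"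
  have F01: "F integrable_on {0..1}" using main_z(1)[of \<beta> \<delta> 0 s sh N0] assms unfolding F_def by auto
  have Dpos: "0 < \<delta> - \<beta> * w" if "0 \<le> w" "w \<le> 1" for w
  proof -
    have "\<beta> * w \<le> \<beta> * 1" using that assms by (intro mult_left_mono) auto
    thus ?thesis using assms by linarith
  qed
  have Dp: "D > 0" unfolding D_def using Dpos assms by auto
  have Geq: "Gfun \<beta> \<delta> N0 w s = E w * Q w" if w: "0 \<le> w" "w < 1" for w
  proof -
    have "Gfun \<beta> \<delta> N0 w s = complex_of_real ((\<delta> - \<beta> * w) / (1 - w)) powr sh * integral {w..1} F"
      unfolding Gfun_def F_def by (rule integral_unique, rule main_z(2)) (use assms w sh in auto)
    also have "complex_of_real ((\<delta> - \<beta> * w) / (1 - w)) powr sh = E w"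
      unfolding E_def L_def by (rule cpowr_pos) (use Dpos[of w] w in auto)
    also have "integral {w..1} F = Q w"
    proof -
      have "integral {0..w} F + integral {w..1} F = I0"
        unfolding I0_def by (rule Henstock_Kurzweil_Integration.integral_combine) (use w F01 in auto)
      thus ?thesis unfolding Q_def by (metis add_diff_cancel_left')
    qed
    finally show ?thesis .
  qed
  have dL: "(L has_real_derivative L') (at z)"
  proof -
    have df: "((\<lambda>w. (\<delta> - \<beta> * w) / (1 - w)) has_real_derivative
        ((0 - \<beta> * 1) * (1 - z) - (\<delta> - \<beta> * z) * (0 - 1)) / ((1 - z) * (1 - z))) (at z)"
      by (rule DERIV_divide[OF DERIV_diff[OF DERIV_const DERIV_cmult[OF DERIV_ident]]
            DERIV_diff[OF DERIV_const DERIV_ident]]) (use assms in simp)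
    have "0 < (\<delta> - \<beta> * z) / (1 - z)" using Dp assms unfolding D_def by simp
    from DERIV_chain2[OF DERIV_ln_divide[OF this] df]
    show ?thesis unfolding L_def L'_def D_def
      by (rule DERIV_cong) (rule L_alg, use Dp assms in \<open>auto simp: D_def\<close>)
  qed
  have dE: "(E has_vector_derivative (of_real L' * (sh * E z))) (at z within S)"
  proof -
    have d1: "((\<lambda>w. complex_of_real (L w)) has_vector_derivative of_real L') (at z within S)"
      by (rule has_vector_derivative_of_real[OF has_field_derivative_at_within[OF dL]])
    have d2: "((\<lambda>x. exp (sh * x)) has_field_derivative sh * E z) (at (of_real (L z)))"
      unfolding E_def by (rule DERIV_cong[OF DERIV_chain2[OF DERIV_exp DERIV_cmult[OF DERIV_ident]]]) simp
    from field_vector_diff_chain_within[OF d1 has_field_derivative_at_within[OF d2]]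
    show ?thesis unfolding E_def o_def .
  qed
  have dQ: "(Q has_vector_derivative (0 - F z)) (at z within S)"
  proof -
    have "isCont F z" using FF_cont[OF assms(1,2), of N0 sh] assms unfolding F_def
      by (subst (asm) continuous_on_eq_continuous_at) auto
    have "((\<lambda>u. integral {0..u} F) has_vector_derivative F z) (at z within ({0..1} - {1}))"
      by (rule integral_has_vector_derivative_continuous_at[OF F01 _ _ continuous_at_imp_continuous_at_within[OF \<open>isCont F z\<close>]])
         (use assms in auto)
    moreover have "{0..1::real} - {1} = S" unfolding S_def by auto
    ultimately have "((\<lambda>u. integral {0..u} F) has_vector_derivative F z) (at z within S)" by simp
    thus ?thesis unfolding Q_def by (rule has_vector_derivative_diff[OF has_vector_derivative_const])
  qed
  have dH: "((\<lambda>w. E w * Q w) has_vector_derivative (E z * (0 - F z) + of_real L' * (sh * E z) * Q z)) (at z within S)"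
    by (rule has_vector_derivative_mult[OF dE dQ])
  have dG: "((\<lambda>w. Gfun \<beta> \<delta> N0 w s) has_vector_derivative (E z * (0 - F z) + of_real L' * (sh * E z) * Q z)) (at z within S)"
    by (rule has_vector_derivative_transform_within[OF dH, of 1]) (use assms Geq in \<open>auto simp: S_def\<close>)
  define X where "X = complex_of_real ((1 - z) * (\<delta> - \<beta> * z))"
  have a: "X * of_real L' * sh = s"
  proof -
    have "(1 - z) * D * L' = \<delta> - \<beta>" unfolding L'_def using Dp assms
      by (simp add: field_simps)
    hence "X * of_real L' = of_real (\<delta> - \<beta>)" unfolding X_def D_def by (metis of_real_mult)
    moreover have "complex_of_real (\<delta> - \<beta>) * sh = s" unfolding sh using assms by simp
    ultimately show ?thesis by simp
  qed
  have b: "X * E z * F z = of_real (z ^ N0)"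
  proof -
    have c1: "1 - z > 0" using assms by simp
    have h1: "F z = exp ((sh - 1) * of_real (ln (1 - z)) + (- sh - 1) * of_real (ln D)) * of_real (z ^ N0)"
      unfolding F_def D_def by (rule FF_exp) (use assms Dp in \<open>auto simp: D_def\<close>)
    have h2: "L z = ln D - ln (1 - z)" unfolding L_def D_def[symmetric] using Dp c1 by (simp add: ln_div)
    have h3: "X = exp (of_real (ln (1 - z))) * exp (of_real (ln D))"
      unfolding X_def D_def[symmetric] of_real_mult using c1 Dp by (simp add: cof_pos[symmetric])
    have "X * E z * F z = exp (of_real (ln (1 - z)) + of_real (ln D) + sh * of_real (ln D - ln (1 - z)) +
         ((sh - 1) * of_real (ln (1 - z)) + (- sh - 1) * of_real (ln D))) * of_real (z ^ N0)"
      unfolding h1 h3 E_def h2 by (simp only: exp_add mult.assoc)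
    also have "of_real (ln (1 - z)) + of_real (ln D) + sh * of_real (ln D - ln (1 - z)) +
         ((sh - 1) * of_real (ln (1 - z)) + (- sh - 1) * of_real (ln D)) = (0::complex)"
      by (simp add: algebra_simps)
    finally show ?thesis by simp
  qed
  have Gz: "Gfun \<beta> \<delta> N0 z s = E z * Q z" using Geq assms by auto
  have "X * (E z * (0 - F z) + of_real L' * (sh * E z) * Q z) = (X * of_real L' * sh) * (E z * Q z) - X * E z * F z"
    by (simp add: algebra_simps)
  also have "\<dots> = s * Gfun \<beta> \<delta> N0 z s - complex_of_real (z ^ N0)" unfolding a b Gz ..
  finally show ?thesis using dG unfolding X_def S_def by blast
qed


theorem mainTheorem6:
  fixes \<beta> \<delta> :: real and N0 :: nat and s :: complex
  assumes "0 < \<beta>" and "\<beta> < \<delta>" and "Re s > 0"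
  defines "sh \<equiv> s / complex_of_real (\<delta> - \<beta>)"
  shows "\<forall>z. 0 \<le> z \<and> z < 1 \<longrightarrow>
           (\<lambda>u. complex_of_real (1 - u) powr (sh - 1) * complex_of_real (\<delta> - \<beta> * u) powr (- sh - 1)
                 * complex_of_real (u ^ N0)) integrable_on {z..1}
         \<and> ((\<lambda>t. complex_of_real (gfun \<beta> \<delta> N0 z t) * exp (- s * complex_of_real t)) has_integral
             (complex_of_real ((\<delta> - \<beta> * z) / (1 - z)) powr sh *
              integral {z..1} (\<lambda>u. complex_of_real (1 - u) powr (sh - 1)
                 * complex_of_real (\<delta> - \<beta> * u) powr (- sh - 1) * complex_of_real (u ^ N0)))) {0..}
         \<and> (\<exists>G'. ((\<lambda>w. Gfun \<beta> \<delta> N0 w s) has_vector_derivative G') (at z within {0..<1})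
                 \<and> complex_of_real ((1 - z) * (\<delta> - \<beta> * z)) * G'
                     = s * Gfun \<beta> \<delta> N0 z s - complex_of_real (z ^ N0))"
proof (intro allI impI)
  fix z :: real assume z: "0 \<le> z \<and> z < 1"
  have shq: "sh = s / complex_of_real (\<delta> - \<beta>)" by (simp add: sh_def)
  have e: "(\<lambda>u. complex_of_real (1 - u) powr (sh - 1) * complex_of_real (\<delta> - \<beta> * u) powr (- sh - 1)
                 * complex_of_real (u ^ N0)) = FF \<beta> \<delta> N0 sh"
    by (rule ext, unfold FF_def, rule refl)
  have m1: "FF \<beta> \<delta> N0 sh integrable_on {z..1}"
    using main_z(1)[OF assms(1,2) _ _ assms(3) shq, of z N0] z by auto
  have m2: "((\<lambda>t. complex_of_real (gfun \<beta> \<delta> N0 z t) * exp (- s * complex_of_real t)) has_integral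
         (complex_of_real ((\<delta> - \<beta> * z) / (1 - z)) powr sh * integral {z..1} (FF \<beta> \<delta> N0 sh))) {0..}"
    using main_z(2)[OF assms(1,2) _ _ assms(3) shq, of z N0] z by auto
  have m3: "\<exists>G'. ((\<lambda>w. Gfun \<beta> \<delta> N0 w s) has_vector_derivative G') (at z within {0..<1})
                 \<and> complex_of_real ((1 - z) * (\<delta> - \<beta> * z)) * G'
                     = s * Gfun \<beta> \<delta> N0 z s - complex_of_real (z ^ N0)"
    using ode[OF assms(1,2) _ _ assms(3) shq, of z N0] z by auto
  show "(\<lambda>u. complex_of_real (1 - u) powr (sh - 1) * complex_of_real (\<delta> - \<beta> * u) powr (- sh - 1)
                 * complex_of_real (u ^ N0)) integrable_on {z..1}
         \<and> ((\<lambda>t. complex_of_real (gfun \<beta> \<delta> N0 z t) * exp (- s * complex_of_real t)) has_integral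
             (complex_of_real ((\<delta> - \<beta> * z) / (1 - z)) powr sh *
              integral {z..1} (\<lambda>u. complex_of_real (1 - u) powr (sh - 1)
                 * complex_of_real (\<delta> - \<beta> * u) powr (- sh - 1) * complex_of_real (u ^ N0)))) {0..}
         \<and> (\<exists>G'. ((\<lambda>w. Gfun \<beta> \<delta> N0 w s) has_vector_derivative G') (at z within {0..<1})
                 \<and> complex_of_real ((1 - z) * (\<delta> - \<beta> * z)) * G'
                     = s * Gfun \<beta> \<delta> N0 z s - complex_of_real (z ^ N0))"
    unfolding e using m1 m2 m3 by blast
qed

end
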